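(* The pair $(\alpha_\infty,\varphi_\infty)=(0,\varphi_\infty)$ satisfies $d_{A_\infty}^*\alpha_\infty-2\pi^{\mathrm{skew}}\bigl(i*[\Phi_\infty^*\wedge\varphi_\infty]\bigr)=0$.
   Context: $X$ is a compact Riemann surface, $\Theta$ a square root of $K_X$, $E=\Theta\oplus\Theta^*$ with hermitian metric $H=k\oplus k^{-1}$ for a hermitian metric $k$ on $\Theta$. Let $q\in H^0(K_X^2)$ have only simple zeros, $X^\times=X\setminus q^{-1}(0)$, and $\dot q\in H^0(K_X^2)$. In a local holomorphic frame $dz^{\pm1/2}$ of $\Theta^{\pm1}$ with $H=\mathrm{diag}(\kappa,\kappa^{-1})$, $q=f\,dz^2$, $\dot q=\dot f\,dz^2$, define on $X^\times$ \[ \Phi_\infty=\begin{pmatrix}0&|f|^{-1/2}\kappa^{-1}f\\|f|^{1/2}\kappa&0\end{pmatrix}dz,\qquad \varphi_\infty=\begin{pmatrix}0&\tfrac12|f|^{-1/2}\kappa^{-1}\dot f\\\tfrac12|f|^{1/2}\kappa\,\dot f/f&0\end{pmatrix}dz \] (globally, $\Phi_\infty=\begin{pmatrix}0&|q|_k^{-1/2}q\\|q|_k^{1/2}&0\end{pmatrix}$ and $\varphi_\infty=\begin{pmatrix}0&\frac12|q|_k^{-1/2}\dot q\\\frac12|q|_k^{1/2}\dot q/q&0\end{pmatrix}$, $|q|_k$ the norm of $q$ induced by $k$). $A_\infty$ is the flat unitary connection of the limiting configuration $(A_\infty,\Phi_\infty)$ (the precise form is irrelevant here since $\alpha_\infty=0$).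 $\Phi_\infty^*$ is the $H$-adjoint, $*$ the Hodge star of a conformal metric on $X$, and $\pi^{\mathrm{skew}}:\mathfrak{sl}(E)\to\mathfrak{su}(E)$ the orthogonal projection onto $H$-skew-hermitian endomorphisms. *)

theory Defs
  imports "HOL-Analysis.Analysis"
begin

(* Pointwise model in a local holomorphic frame dz^{1/2}, dz^{-1/2} and coordinate z = x + i y. *)

type_synonym cmat = "complex^2^2"

definition mat2 :: "complex \<Rightarrow> complex \<Rightarrow> complex \<Rightarrow> complex \<Rightarrow> cmat" where
  "mat2 a b c d = vector [vector [a, b], vector [c, d]]"

definition ctrans :: "cmat \<Rightarrow> cmat" where
  "ctrans A = (\<chi> i j. cnj (A $ j $ i))"

(* adjoint with respect to the hermitian metric with matrix H *)
definition Hadj :: "cmat \<Rightarrow> cmat \<Rightarrow> cmat" where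
  "Hadj H A = matrix_inv H ** ctrans A ** H"

definition pi_skew :: "cmat \<Rightarrow> cmat \<Rightarrow> cmat" where
  "pi_skew H A = (1/2::real) *\<^sub>R (A - Hadj H A)"

definition cscale :: "complex \<Rightarrow> cmat \<Rightarrow> cmat" where
  "cscale c A = (\<chi> i j. c * A $ i $ j)"

(* matrix-valued 1-form a dz + b dzbar, stored as (a, b) *)
type_synonym mform1 = "cmat \<times> cmat"

(* H-adjoint of a matrix-valued 1-form: (a dz + b dzbar)^* = b^* dz + a^* dzbar *)
definition form_adj :: "cmat \<Rightarrow> mform1 \<Rightarrow> mform1" where
  "form_adj H w = (Hadj H (snd w), Hadj H (fst w))"

(* [alpha \<and> beta] = alpha\<and>beta + beta\<and>alpha, returned as its coefficient
   w.r.t. dx\<and>dy, using dz\<and>dzbar = -2i dx\<and>dy *)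
definition wedge_bracket :: "mform1 \<Rightarrow> mform1 \<Rightarrow> cmat" where
  "wedge_bracket v w =
     cscale (-2 * \<i>) (fst v ** snd w - snd v ** fst w + fst w ** snd v - snd w ** fst v)"

(* Hodge star of the 2-form c dx\<and>dy for the conformal metric lam (dx^2+dy^2) *)
definition hodge2 :: "real \<Rightarrow> cmat \<Rightarrow> cmat" where
  "hodge2 lam c = (1 / lam) *\<^sub>R c"

end

theory Submission
  imports Defs
begin

lemma vec_eq2: "(A::cmat) = B \<longleftrightarrow> (\<forall>i j. A$i$j = B$i$j)"
  by (metis vec_eq_iff)

lemma mat2_nth: "mat2 a b c d $ i $ j =
   (if i = 1 then (if j = 1 then a else b) else (if j = 1 then c else d))"
proof -
  have i: "i = 1 \<or> i = 2" and j: "j = 1 \<or> j = 2" using exhaust_2 by auto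
  show ?thesis using i j by (auto simp: mat2_def)
qed

lemma sum2: "(\<Sum>k\<in>(UNIV::2 set). g k) = g 1 + g 2"
  by (simp add: UNIV_2)

lemma mat2_mult: "mat2 a b c d ** mat2 a' b' c' d' =
  mat2 (a*a'+b*c') (a*b'+b*d') (c*a'+d*c') (c*b'+d*d')"
  unfolding vec_eq2 matrix_matrix_mult_def
  by (auto simp: sum2 mat2_nth)

lemma two_ne1: "(i::2) \<noteq> 1 \<Longrightarrow> (j::2) \<noteq> 1 \<Longrightarrow> i = j"
  by (metis exhaust_2)

lemma my_inv_unique:
  fixes A B :: cmat
  assumes "A ** B = mat 1" "B ** A = mat 1"
  shows "matrix_inv A = B"
proof -
  have ex: "\<exists>A'. A ** A' = mat 1 \<and> A' ** A = mat 1" using assms by blast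
  define C where "C = matrix_inv A"
  have C: "A ** C = mat 1 \<and> C ** A = mat 1"
    unfolding C_def matrix_inv_def by (rule someI_ex[OF ex])
  have "C = C ** (A ** B)" using assms by simp
  also have "\<dots> = (C ** A) ** B" by (simp add: matrix_mul_assoc)
  also have "\<dots> = B" using C by simp
  finally show ?thesis unfolding C_def .
qed

lemma inv_diag:
  assumes "k \<noteq> 0"
  shows "matrix_inv (mat2 (of_real k) 0 0 (of_real (1/k))) = mat2 (of_real (1/k)) 0 0 (of_real k)"
proof (rule my_inv_unique)
  show "mat2 (complex_of_real k) 0 0 (complex_of_real (1 / k)) ** mat2 (complex_of_real (1 / k)) 0 0 (complex_of_real k) = mat 1"
    unfolding mat2_mult vec_eq2 using assms by (auto simp: mat2_nth mat_def two_ne1 simp flip: of_real_mult)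
  show "mat2 (complex_of_real (1 / k)) 0 0 (complex_of_real k) ** mat2 (complex_of_real k) 0 0 (complex_of_real (1 / k)) = mat 1"
    unfolding mat2_mult vec_eq2 using assms by (auto simp: mat2_nth mat_def two_ne1 simp flip: of_real_mult)
qed

lemma ctrans_mat2: "ctrans (mat2 a b c d) = mat2 (cnj a) (cnj c) (cnj b) (cnj d)"
  unfolding vec_eq2 ctrans_def by (auto simp: mat2_nth)

lemma zero_mat2: "(0::cmat) = mat2 0 0 0 0"
  unfolding vec_eq2 by (auto simp: mat2_nth)

lemma cscale_mat2: "cscale s (mat2 a b c d) = mat2 (s*a) (s*b) (s*c) (s*d)"
  unfolding vec_eq2 cscale_def by (auto simp: mat2_nth)

lemma scaleR_mat2: "r *\<^sub>R (mat2 a b c d) = mat2 (r*\<^sub>Ra) (r*\<^sub>Rb) (r*\<^sub>Rc) (r*\<^sub>Rd)"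
  unfolding vec_eq2 by (auto simp: mat2_nth)

lemma diff_mat2: "mat2 a b c d - mat2 a' b' c' d' = mat2 (a-a') (b-b') (c-c') (d-d')"
  unfolding vec_eq2 by (auto simp: mat2_nth)

lemma add_mat2: "mat2 a b c d + mat2 a' b' c' d' = mat2 (a+a') (b+b') (c+c') (d+d')"
  unfolding vec_eq2 by (auto simp: mat2_nth)

lemma mat2_eq: "mat2 a b c d = mat2 a' b' c' d' \<longleftrightarrow> a=a' \<and> b=b' \<and> c=c' \<and> d=d'"
  proof
  assume "mat2 a b c d = mat2 a' b' c' d'"
  then have "\<forall>i j. mat2 a b c d $ i $ j = mat2 a' b' c' d' $ i $ j" by simp
  then show "a=a' \<and> b=b' \<and> c=c' \<and> d=d'"
  proof -
    have n: "(2::2) \<noteq> 1" by simp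
    note h = spec[OF spec[OF \<open>\<forall>i j. _\<close>]]
    show ?thesis using h[of 1 1] h[of 1 2] h[of 2 1] h[of 2 2] n by (simp add: mat2_nth)
  qed
qed simp

theorem lemma3p11:
  fixes f fdot :: complex and kappa lam :: real
  assumes "f \<noteq> 0" and "kappa > 0" and "lam > 0"
  shows "let H = mat2 (of_real kappa) 0 0 (of_real (1 / kappa));
             Phi = (mat2 0 (of_real (1 / (sqrt (cmod f) * kappa)) * f)
                          (of_real (sqrt (cmod f) * kappa)) 0, 0::cmat);
             phi = (mat2 0 (of_real (1 / (2 * sqrt (cmod f) * kappa)) * fdot)
                          (of_real (sqrt (cmod f) * kappa / 2) * fdot / f) 0, 0::cmat)
         in (0::cmat) - 2 *\<^sub>R pi_skew H (cscale \<i> (hodge2 lam (wedge_bracket (form_adj H Phi) phi))) = 0"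
proof -
  let ?H = "mat2 (of_real kappa) 0 0 (of_real (1 / kappa)) :: cmat"
  have inv: "matrix_inv ?H = mat2 (of_real (1/kappa)) 0 0 (of_real kappa)"
    using assms by (intro inv_diag) auto
  have s: "sqrt (cmod f) > 0" using assms by simp
  have cf: "cnj f * f = of_real ((cmod f)^2)" by (metis complex_norm_square mult.commute of_real_power)
  have ss: "\<And>x. of_real (sqrt (cmod f)) * (of_real (sqrt (cmod f)) * x) = of_real (cmod f) * (x::complex)"
    "of_real (sqrt (cmod f)) * of_real (sqrt (cmod f)) = (of_real (cmod f)::complex)"
    by (simp_all add: mult.assoc[symmetric] flip: of_real_mult)
  have cnjf: "cnj f = (of_real (cmod f))^2 / f" using cf assms by (simp add: field_simps)
  show ?thesis
    unfolding Let_def pi_skew_def Hadj_def form_adj_def wedge_bracket_def hodge2_def inv fst_conv snd_conv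
    unfolding zero_mat2 ctrans_mat2 mat2_mult cscale_mat2 scaleR_mat2 diff_mat2
    using assms s
    apply (simp add: mat2_mult ctrans_mat2 diff_mat2 add_mat2 cscale_mat2 scaleR_mat2 mat2_eq)
    apply (simp add: ss cnjf field_simps power2_eq_square)
    done
qed
end
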